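(* Let $\mathcal{X},\mathcal{Y}\in\{\mathcal{U},\mathcal{D},\mathcal{B},\mathcal{L},\mathcal{R}\}$ with $\mathcal{X}\not\le_{\mathfrak T}\mathcal{Y}$. Then for every $I\in\mathcal{X}$ and $J\in\mathcal{Y}$, $\mathrm{Hom}_B(k_I,k_J)=0$.
   Context: Let $k$ be a field. The bipath poset $B$ has underlying set $(\mathbb{R}\times\{1,2\})\sqcup\{-\infty,+\infty\}$. Its order is: $x\le y$ iff $x=-\infty$, or $y=+\infty$, or $x=(s,i)$, $y=(t,i)$ with the same $i$ and $s\le t$. $B$-persistence modules are functors from $B$ (as a category) to $k$-vector spaces, and $\mathrm{Hom}_B$ denotes natural transformations. An interval of $B$ is a nonempty convex and connected subset (convex: $p,q\in I$, $p\le r\le q$ imply $r\in I$; connected: any two elements are joined by a finite sequence in $I$ with consecutive ones comparable). The interval module $k_I$ is $k$ on $I$ and $0$ elsewhere, with identity maps within $I$ and zero maps otherwise. The intervals of $B$ are divided into five types: - $\mathcal{U}$: intervals contained in $\mathbb{R}\times\{1\}$; - $\mathcal{D}$: intervals contained in $\mathbb{R}\times\{2\}$; - $\mathcal{B}=\{B\}$; - $\mathcal{L}$: intervals $\neq B$ containing $-\infty$; - $\mathcal{R}$: intervals $\neq B$ containing $+\infty$. $\le_{\mathfrak T}$ is the partial order on these five types generated by $\mathcal{R}\le\mathcal{U}$, $\mathcal{R}\le\mathcal{B}$, $\mathcal{R}\le\mathcal{D}$, $\mathcal{U}\le\mathcal{L}$, $\mathcal{B}\le\mathcal{L}$, $\mathcal{D}\le\mathcal{L}$.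 It is the reflexive-transitive closure, so also $\mathcal{R}\le\mathcal{L}$. *)

theory Defs
  imports Main "HOL.Real"
begin

datatype side = S1 | S2

datatype bpt = MInf | PInf | Pt real side

fun bp_le :: "bpt \<Rightarrow> bpt \<Rightarrow> bool" where
  "bp_le MInf y = True"
| "bp_le x PInf = True"
| "bp_le (Pt s i) (Pt t j) = (i = j \<and> s \<le> t)"
| "bp_le _ _ = False"

definition bp_comparable :: "bpt \<Rightarrow> bpt \<Rightarrow> bool" where
  "bp_comparable x y \<longleftrightarrow> bp_le x y \<or> bp_le y x"

definition bp_convex :: "bpt set \<Rightarrow> bool" where
  "bp_convex I \<longleftrightarrow> (\<forall>p q r. p \<in> I \<longrightarrow> q \<in> I \<longrightarrow> bp_le p r \<longrightarrow> bp_le r q \<longrightarrow> r \<in> I)"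

definition bp_connected :: "bpt set \<Rightarrow> bool" where
  "bp_connected I \<longleftrightarrow> (\<forall>p\<in>I. \<forall>q\<in>I. \<exists>xs. xs \<noteq> [] \<and> hd xs = p \<and> last xs = q \<and>
      set xs \<subseteq> I \<and> (\<forall>i. Suc i < length xs \<longrightarrow> bp_comparable (xs ! i) (xs ! Suc i)))"

definition bp_interval :: "bpt set \<Rightarrow> bool" where
  "bp_interval I \<longleftrightarrow> I \<noteq> {} \<and> bp_convex I \<and> bp_connected I"

datatype itype = TU | TD | TB | TL | TR

definition in_itype :: "itype \<Rightarrow> bpt set \<Rightarrow> bool" where
  "in_itype X I \<longleftrightarrow> bp_interval I \<and>
     (case X of
        TU \<Rightarrow> I \<subseteq> {Pt s S1 | s. True}
      | TD \<Rightarrow> I \<subseteq> {Pt s S2 | s. True}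
      | TB \<Rightarrow> I = UNIV
      | TL \<Rightarrow> I \<noteq> UNIV \<and> MInf \<in> I
      | TR \<Rightarrow> I \<noteq> UNIV \<and> PInf \<in> I)"

fun itype_gen :: "itype \<Rightarrow> itype \<Rightarrow> bool" where
  "itype_gen TR TU = True"
| "itype_gen TR TB = True"
| "itype_gen TR TD = True"
| "itype_gen TU TL = True"
| "itype_gen TB TL = True"
| "itype_gen TD TL = True"
| "itype_gen _ _ = False"

definition itype_le :: "itype \<Rightarrow> itype \<Rightarrow> bool" where
  "itype_le = itype_gen\<^sup>*\<^sup>*"

text \<open>The interval module k_I, realised with all spaces inside the field 'k:
  the space at x is k if x in I and the zero space otherwise.\<close>
definition imod_space :: "bpt set \<Rightarrow> bpt \<Rightarrow> 'k::field set" where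
  "imod_space I x = (if x \<in> I then UNIV else {0})"

definition imod_map :: "bpt set \<Rightarrow> bpt \<Rightarrow> bpt \<Rightarrow> 'k::field \<Rightarrow> 'k" where
  "imod_map I x y v = (if x \<in> I \<and> y \<in> I then v else 0)"

definition imod_hom :: "bpt set \<Rightarrow> bpt set \<Rightarrow> (bpt \<Rightarrow> 'k::field \<Rightarrow> 'k) \<Rightarrow> bool" where
  "imod_hom I J \<eta> \<longleftrightarrow>
     (\<forall>x. \<forall>v\<in>imod_space I x. \<eta> x v \<in> imod_space J x) \<and>
     (\<forall>x. \<forall>v\<in>imod_space I x. \<forall>w\<in>imod_space I x. \<eta> x (v + w) = \<eta> x v + \<eta> x w) \<and>
     (\<forall>x. \<forall>a. \<forall>v\<in>imod_space I x. \<eta> x (a * v) = a * \<eta> x v) \<and>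
     (\<forall>x y. bp_le x y \<longrightarrow> (\<forall>v\<in>imod_space I x.
         \<eta> y (imod_map I x y v) = imod_map J x y (\<eta> x v)))"

definition imod_hom_zero :: "'k::field itself \<Rightarrow> bpt set \<Rightarrow> bpt set \<Rightarrow> bool" where
  "imod_hom_zero _ I J \<longleftrightarrow>
     (\<forall>\<eta> :: bpt \<Rightarrow> 'k \<Rightarrow> 'k. imod_hom I J \<eta> \<longrightarrow> (\<forall>x. \<forall>v\<in>imod_space I x. \<eta> x v = 0))"

end

theory Submission
  imports Defs
begin

lemma eta_zero:
  assumes "imod_hom I J (\<eta> :: bpt \<Rightarrow> 'k::field \<Rightarrow> 'k)"
  shows "\<eta> x 0 = 0"
proof -
  have "0 \<in> (imod_space I x :: 'k set)" by (simp add: imod_space_def)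
  then have "\<eta> x (0 * 0) = 0 * \<eta> x 0" using assms unfolding imod_hom_def by blast
  then show ?thesis by simp
qed

lemma nz_in:
  assumes h: "imod_hom I J (\<eta> :: bpt \<Rightarrow> 'k::field \<Rightarrow> 'k)"
    and v: "v \<in> imod_space I x" and nz: "\<eta> x v \<noteq> 0"
  shows "x \<in> I \<and> x \<in> J"
proof -
  have xI: "x \<in> I"
  proof (rule ccontr)
    assume "x \<notin> I"
    then have "v = 0" using v by (simp add: imod_space_def)
    then show False using nz eta_zero[OF h] by simp
  qed
  have "\<eta> x v \<in> imod_space J x" using h v unfolding imod_hom_def by blast
  then have "x \<in> J" using nz by (auto simp: imod_space_def split: if_splits)
  then show ?thesis using xI by simp
qed

lemma up_zero:
  assumes h: "imod_hom I J (\<eta> :: bpt \<Rightarrow> 'k::field \<Rightarrow> 'k)"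
    and "x \<in> I" "x \<in> J" "PInf \<in> J" "PInf \<notin> I"
  shows "\<eta> x v = 0"
proof -
  have "v \<in> imod_space I x" using assms by (simp add: imod_space_def)
  moreover have "bp_le x PInf" by (cases x) auto
  ultimately have "\<eta> PInf (imod_map I x PInf v) = imod_map J x PInf (\<eta> x v)"
    using h unfolding imod_hom_def by blast
  then show ?thesis using assms eta_zero[OF h] by (simp add: imod_map_def)
qed

lemma down_zero:
  assumes h: "imod_hom I J (\<eta> :: bpt \<Rightarrow> 'k::field \<Rightarrow> 'k)"
    and "x \<in> I" "MInf \<in> I" "MInf \<notin> J"
  shows "\<eta> x v = 0"
proof -
  have "v \<in> imod_space I MInf" using assms by (simp add: imod_space_def)
  moreover have "bp_le MInf x" by simp
  ultimately have "\<eta> x (imod_map I MInf x v) = imod_map J MInf x (\<eta> MInf v)"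
    using h unfolding imod_hom_def by blast
  then show ?thesis using assms by (simp add: imod_map_def)
qed

lemma both_univ:
  assumes "bp_interval I" "MInf \<in> I" "PInf \<in> I"
  shows "I = UNIV"
proof -
  have c: "bp_convex I" using assms(1) unfolding bp_interval_def by simp
  have "r \<in> I" for r
  proof -
    have "bp_le MInf r" by simp
    moreover have "bp_le r PInf" by (cases r) auto
    ultimately show ?thesis using c assms(2,3) unfolding bp_convex_def by blast
  qed
  then show ?thesis by auto
qed

lemma gen_le: "itype_gen X Y \<Longrightarrow> itype_le X Y"
  unfolding itype_le_def by auto

lemma refl_le: "itype_le X X"
  unfolding itype_le_def by auto

lemma RL_le: "itype_le TR TL"
  unfolding itype_le_def
proof -
  have "itype_gen TR TU" "itype_gen TU TL" by simp_all
  then show "itype_gen\<^sup>*\<^sup>* TR TL" by (meson rtranclp.rtrancl_refl rtranclp.rtrancl_into_rtrancl)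
qed

lemma tU: "in_itype TU I \<Longrightarrow> MInf \<notin> I \<and> PInf \<notin> I \<and> (\<forall>x\<in>I. \<exists>s. x = Pt s S1)"
  unfolding in_itype_def by auto
lemma tD: "in_itype TD I \<Longrightarrow> MInf \<notin> I \<and> PInf \<notin> I \<and> (\<forall>x\<in>I. \<exists>s. x = Pt s S2)"
  unfolding in_itype_def by auto
lemma tB: "in_itype TB I \<Longrightarrow> MInf \<in> I \<and> PInf \<in> I"
  unfolding in_itype_def by auto
lemma tL: "in_itype TL I \<Longrightarrow> MInf \<in> I \<and> PInf \<notin> I"
  unfolding in_itype_def using both_univ by auto
lemma tR: "in_itype TR I \<Longrightarrow> PInf \<in> I \<and> MInf \<notin> I"
  unfolding in_itype_def using both_univ by auto

theorem lemma4p4: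
  fixes X Y :: itype and I J :: "bpt set"
  assumes "\<not> itype_le X Y"
    and "in_itype X I" and "in_itype Y J"
  shows "imod_hom_zero TYPE('k::field) I J"
  unfolding imod_hom_zero_def
proof (intro allI impI ballI)
  fix \<eta> :: "bpt \<Rightarrow> 'k \<Rightarrow> 'k" and x and v :: 'k
  assume h: "imod_hom I J \<eta>" and v: "v \<in> imod_space I x"
  show "\<eta> x v = 0"
  proof (rule ccontr)
    assume nz: "\<eta> x v \<noteq> 0"
    then have xI: "x \<in> I" and xJ: "x \<in> J" using nz_in[OF h v] by auto
    have U: "PInf \<in> J \<Longrightarrow> PInf \<notin> I \<Longrightarrow> False" using up_zero[OF h xI xJ] nz by blast
    have D: "MInf \<in> I \<Longrightarrow> MInf \<notin> J \<Longrightarrow> False" using down_zero[OF h xI] nz by blast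
    have nle: "\<not> itype_le X Y" by (rule assms(1))
    show False
    proof (cases X)
      case TU
      note a = tU[OF assms(2)[unfolded TU]]
      show ?thesis proof (cases Y)
        case TU then show ?thesis using nle \<open>X = _\<close> refl_le by simp
      next case TD then show ?thesis using a tD[OF assms(3)[unfolded TD]] xI xJ by fastforce
      next case TB then show ?thesis using a tB[OF assms(3)[unfolded TB]] U by blast
      next case TL then show ?thesis using nle \<open>X = _\<close> gen_le by simp
      next case TR then show ?thesis using a tR[OF assms(3)[unfolded TR]] U by blast
      qed
    next
      case TD
      note a = tD[OF assms(2)[unfolded TD]]
      show ?thesis proof (cases Y)
        case TD then show ?thesis using nle \<open>X = _\<close> refl_le by simp
      next case TU then show ?thesis using a tU[OF assms(3)[unfolded TU]] xI xJ by fastforce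
      next case TB then show ?thesis using a tB[OF assms(3)[unfolded TB]] U by blast
      next case TL then show ?thesis using nle \<open>X = _\<close> gen_le by simp
      next case TR then show ?thesis using a tR[OF assms(3)[unfolded TR]] U by blast
      qed
    next
      case TB
      note a = tB[OF assms(2)[unfolded TB]]
      show ?thesis proof (cases Y)
        case TB then show ?thesis using nle \<open>X = _\<close> refl_le by simp
      next case TU then show ?thesis using a tU[OF assms(3)[unfolded TU]] D by blast
      next case TD then show ?thesis using a tD[OF assms(3)[unfolded TD]] D by blast
      next case TL then show ?thesis using nle \<open>X = _\<close> gen_le by simp
      next case TR then show ?thesis using a tR[OF assms(3)[unfolded TR]] D by blast
      qed
    next
      case TL
      note a = tL[OF assms(2)[unfolded TL]]
      show ?thesis proof (cases Y)
        case TL then show ?thesis using nle \<open>X = _\<close> refl_le by simp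
      next case TU then show ?thesis using a tU[OF assms(3)[unfolded TU]] D by blast
      next case TD then show ?thesis using a tD[OF assms(3)[unfolded TD]] D by blast
      next case TB then show ?thesis using a tB[OF assms(3)[unfolded TB]] U by blast
      next case TR then show ?thesis using a tR[OF assms(3)[unfolded TR]] D by blast
      qed
    next
      case TR
      show ?thesis proof (cases Y)
        case TR then show ?thesis using nle \<open>X = _\<close> refl_le by simp
      next case TL then show ?thesis using nle \<open>X = _\<close> RL_le by simp
      qed (use nle \<open>X = _\<close> gen_le in simp_all)
    qed
  qed
qed

end
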